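(* In the quantized ARX setting described in the context, suppose Assumptions (A1) and (A2) hold. Then there is a constant $c_4>0$ such that, almost surely, $\lambda^{(p^*,q_0)}_{max}(n)\le c_4(n+1)$ for all sufficiently large $n$, where $\lambda^{(p^*,q_0)}_{max}(n)$ is the largest eigenvalue of $\sum_{i=0}^n\psi_i(p^*,q_0)\psi_i(p^*,q_0)^\top+I$.
   Context: System: $y_{n+1}=-a_1y_n-\dots-a_{p_0}y_{n-p_0+1}+b_1u_n+\dots+b_{q_0}u_{n-q_0+1}+w_{n+1}$, $n\ge0$, i.e. $A(z)y_{n+1}=B(z)u_n+w_{n+1}$ with $A(z)=1+a_1z+\dots+a_{p_0}z^{p_0}$ ($p_0\ge0$), $B(z)=b_1+\dots+b_{q_0}z^{q_0-1}$ ($q_0\ge1$), $z$ the backward shift, $a_{p_0}\ne0$, $b_{q_0}\ne0$. Noise $\{w_n\}$ i.i.d. $N(0,1)$; $y_n=u_n=w_n=0$ for $n<0$. With quantization step $\varepsilon>0$, $s_n=\varepsilon\lfloor y_n/\varepsilon+1/2\rfloor$. For integers $p,q\ge0$, $\psi_i(p,q)=[s_i,\dots,s_{i-p+1},u_i,\dots,u_{i-q+1}]^\top$ with $s_i=u_i=0$ when $i\le0$. $p^*>0$ is a fixed integer (known upper bound for $p_0$). (A1) $\{u_i\}$ i.i.d., uniform on $[-\delta,\delta]$, $\delta>0$. (A2) $A(z)\ne0$ for all $|z|\le1$. *)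

theory Defs
  imports "HOL-Probability.Probability" "Jordan_Normal_Form.Char_Poly"
begin

definition quant :: "real \<Rightarrow> real \<Rightarrow> real" where
  "quant eps v = eps * real_of_int \<lfloor>v / eps + 1/2\<rfloor>"

text \<open>Regressor psi_i(p,q) = [s_i,...,s_{i-p+1}, u_i,...,u_{i-q+1}], as a nat-indexed
  vector of length p+q, with s_j = u_j = 0 for j <= 0.\<close>
definition psi :: "(nat \<Rightarrow> real) \<Rightarrow> (nat \<Rightarrow> real) \<Rightarrow> nat \<Rightarrow> nat \<Rightarrow> nat \<Rightarrow> nat \<Rightarrow> real" where
  "psi s u p q i k =
     (if k < p then (if k < i then s (i - k) else 0)
      else if k < p + q then (if k - p < i then u (i - (k - p)) else 0)
      else 0)"

definition info_mat :: "(nat \<Rightarrow> real) \<Rightarrow> (nat \<Rightarrow> real) \<Rightarrow> nat \<Rightarrow> nat \<Rightarrow> nat \<Rightarrow> real mat" where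
  "info_mat s u p q n = mat (p + q) (p + q)
     (\<lambda>(k, l). (\<Sum>i = 0..n. psi s u p q i k * psi s u p q i l) + (if k = l then 1 else 0))"

definition lambda_max :: "real mat \<Rightarrow> real" where
  "lambda_max A = Max {k. eigenvalue A k}"

end

theory Submission
  imports Defs "HOL-Complex_Analysis.Complex_Analysis"
begin


lemma poly_has_fps: "poly P has_fps_expansion fps_of_poly P"
  unfolding has_fps_expansion_def by simp

lemma stab_summable:
  fixes a :: "nat \<Rightarrow> real" and p0 :: nat
  assumes A2: "\<And>z::complex. cmod z \<le> 1 \<Longrightarrow> 1 + (\<Sum>j = 1..p0. of_real (a j) * z ^ j) \<noteq> 0"
  defines "P \<equiv> 1 + (\<Sum>j = 1..p0. monom (complex_of_real (a j)) j)"
  shows "summable (\<lambda>n. norm (fps_nth (inverse (fps_of_poly P)) n))"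
proof -
  have polyP: "poly P z = 1 + (\<Sum>j = 1..p0. of_real (a j) * z ^ j)" for z
    unfolding P_def by (simp add: poly_sum poly_monom)
  have c0: "coeff P 0 = 1" unfolding P_def by (simp add: coeff_sum)
  hence Pnz: "P \<noteq> 0" by auto
  define R where "R = {z. poly P z = 0}"
  have finR: "finite R" unfolding R_def using poly_roots_finite[OF Pnz] .
  have Rbig: "z \<in> R \<Longrightarrow> norm z > 1" for z
    using A2[of z] unfolding R_def polyP by force
  define r where "r = (if R = {} then 2 else Min (norm ` R))"
  have r1: "r > 1" using finR Rbig unfolding r_def by auto
  have nz: "poly P z \<noteq> 0" if "norm z < r" for z
  proof
    assume "poly P z = 0"
    hence "z \<in> R" unfolding R_def by simp
    hence "r \<le> norm z" using finR unfolding r_def by auto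
    with that show False by simp
  qed
  have exp: "(\<lambda>z. inverse (poly P z)) has_fps_expansion inverse (fps_of_poly P)"
    by (intro has_fps_expansion_inverse poly_has_fps) (simp add: c0)
  have hol: "(\<lambda>z. inverse (poly P z)) holomorphic_on eball 0 (ereal r)"
    using nz by (intro holomorphic_intros) auto
  have "fps_conv_radius (inverse (fps_of_poly P)) \<ge> ereal r"
    by (rule holomorphic_on_imp_fps_conv_radius_ge[OF exp hol])
  hence "ereal (norm (1::complex)) < conv_radius (fps_nth (inverse (fps_of_poly P)))"
    using r1 by (simp add: fps_conv_radius_def) (meson ereal_less(2)  order.strict_trans2 ereal_less_eq(3) less_ereal.simps(1))
  from abs_summable_in_conv_radius[OF this] show ?thesis by simp
qed


lemma shift_sum_le:
  fixes f :: "nat \<Rightarrow> real"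
  assumes "\<And>k. f k \<ge> 0"
  shows "(\<Sum>n\<le>N. if i \<le> n then f (n - i) else 0) \<le> (\<Sum>k\<le>N. f k)"
proof (cases "i \<le> N")
  case True
  have "(\<Sum>n\<le>N. if i \<le> n then f (n - i) else 0) = (\<Sum>n\<in>{i..N}. f (n - i))"
    by (rule sum.mono_neutral_cong_right) auto
  also have "\<dots> = (\<Sum>k\<in>{0..N-i}. f k)"
    using sum.shift_bounds_cl_nat_ivl[of "\<lambda>n. f (n - i)" 0 i "N-i"] True by simp
  also have "\<dots> \<le> (\<Sum>k\<le>N. f k)"
    by (rule sum_mono2) (auto simp: assms)
  finally show ?thesis .
next
  case False
  hence "(\<Sum>n\<le>N. if i \<le> n then f (n - i) else 0) = 0" by (intro sum.neutral) auto
  thus ?thesis by (simp add: sum_nonneg assms)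
qed

lemma young:
  fixes c g :: "nat \<Rightarrow> real"
  assumes c0: "\<And>n. c n \<ge> 0" and cs: "summable c" and g0: "\<And>n. g n \<ge> 0"
  shows "(\<Sum>n\<le>N. (\<Sum>i\<le>n. c i * g (n - i))^2) \<le> (suminf c)^2 * (\<Sum>k\<le>N. (g k)^2)"
proof -
  define C where "C = suminf c"
  have pc: "(\<Sum>i\<le>n. c i) \<le> C" for n
    unfolding C_def using sum_le_suminf[OF cs, of "{..n}"] c0 by auto
  have C0: "C \<ge> 0" using pc[of 0] c0[of 0] by simp
  have step: "(\<Sum>i\<le>n. c i * g (n - i))^2 \<le> C * (\<Sum>i\<le>n. c i * (g (n - i))^2)" for n
  proof -
    have "(\<Sum>i\<le>n. c i * g (n - i))^2 = (\<Sum>i\<le>n. sqrt (c i) * (sqrt (c i) * g (n - i)))^2"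
      using c0 by (simp add: mult.assoc[symmetric])
    also have "\<dots> \<le> (\<Sum>i\<le>n. (sqrt (c i))^2) * (\<Sum>i\<le>n. (sqrt (c i) * g (n - i))^2)"
      by (rule Cauchy_Schwarz_ineq_sum)
    also have "\<dots> = (\<Sum>i\<le>n. c i) * (\<Sum>i\<le>n. c i * (g (n - i))^2)"
      using c0 by (simp add: power_mult_distrib)
    also have "\<dots> \<le> C * (\<Sum>i\<le>n. c i * (g (n - i))^2)"
      by (intro mult_right_mono pc sum_nonneg) (auto simp: c0)
    finally show ?thesis .
  qed
  have "(\<Sum>n\<le>N. (\<Sum>i\<le>n. c i * g (n - i))^2) \<le> (\<Sum>n\<le>N. C * (\<Sum>i\<le>n. c i * (g (n - i))^2))"
    by (intro sum_mono step)
  also have "\<dots> = C * (\<Sum>n\<le>N. \<Sum>i\<le>N. if i \<le> n then c i * (g (n - i))^2 else 0)"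
  proof -
    have "(\<Sum>i\<le>n. c i * (g (n - i))^2) = (\<Sum>i\<le>N. if i \<le> n then c i * (g (n - i))^2 else 0)"
      if "n \<le> N" for n using that by (intro sum.mono_neutral_cong_left) auto
    thus ?thesis by (simp add: sum_distrib_left[symmetric])
  qed
  also have "\<dots> = C * (\<Sum>i\<le>N. c i * (\<Sum>n\<le>N. if i \<le> n then (g (n - i))^2 else 0))"
    by (subst sum.swap) (simp add: sum_distrib_left if_distrib cong: if_cong)
  also have "\<dots> \<le> C * (\<Sum>i\<le>N. c i * (\<Sum>k\<le>N. (g k)^2))"
    by (intro mult_left_mono sum_mono shift_sum_le C0 c0) auto
  also have "\<dots> = C * ((\<Sum>i\<le>N. c i) * (\<Sum>k\<le>N. (g k)^2))"
    by (simp add: sum_distrib_right)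
  also have "\<dots> \<le> C * (C * (\<Sum>k\<le>N. (g k)^2))"
    by (intro mult_left_mono mult_right_mono pc C0 sum_nonneg) auto
  finally show ?thesis by (simp add: C_def power2_eq_square mult.assoc)
qed


lemma stab:
  fixes a :: "nat \<Rightarrow> real" and p0 :: nat
  assumes A2: "\<And>z::complex. cmod z \<le> 1 \<Longrightarrow> 1 + (\<Sum>j = 1..p0. of_real (a j) * z ^ j) \<noteq> 0"
  shows "\<exists>H\<ge>0. \<forall>(y::nat\<Rightarrow>real) e N. (\<forall>n. y n + (\<Sum>j = 1..p0. a j * (if j \<le> n then y (n - j) else 0)) = e n)
          \<longrightarrow> (\<Sum>n\<le>N. (y n)^2) \<le> H * (\<Sum>n\<le>N. (e n)^2)"
proof -
  define P where "P \<equiv> 1 + (\<Sum>j = 1..p0. monom (complex_of_real (a j)) j)"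
  define F where "F = fps_of_poly P"
  define c where "c n = norm (fps_nth (inverse F) n)" for n
  have cs: "summable c" unfolding c_def F_def P_def by (rule stab_summable[OF A2])
  have coeffP: "coeff P i = (if i = 0 then 1 else 0) + (\<Sum>j = 1..p0. if j = i then complex_of_real (a j) else 0)" for i
    unfolding P_def by (simp add: coeff_sum coeff_monom)
  have coeffP': "coeff P i = (if 1 \<le> i \<and> i \<le> p0 then complex_of_real (a i) else if i = 0 then 1 else 0)" for i
    unfolding coeffP by (simp add: sum.delta)
  have c0: "coeff P 0 = 1" by (simp add: coeffP')
  have F0: "F $ 0 = 1" unfolding F_def by (simp add: c0)
  show ?thesis
  proof (intro exI[of _ "(suminf c)^2"] conjI allI impI)
    show "0 \<le> (suminf c)^2" by simp
    fix y e :: "nat \<Rightarrow> real" and N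
    assume rec: "\<forall>n. y n + (\<Sum>j = 1..p0. a j * (if j \<le> n then y (n - j) else 0)) = e n"
    define Y where "Y = Abs_fps (\<lambda>n. complex_of_real (y n))"
    have FY: "(F * Y) $ n = complex_of_real (e n)" for n
    proof -
      have "(F * Y) $ n = (\<Sum>i = 0..n. coeff P i * complex_of_real (y (n - i)))"
        unfolding F_def Y_def by (simp add: fps_mult_nth)
      also have "\<dots> = coeff P 0 * complex_of_real (y n) + (\<Sum>i = 1..n. coeff P i * complex_of_real (y (n - i)))"
        by (simp add: sum.atLeast_Suc_atMost)
      also have "(\<Sum>i = 1..n. coeff P i * complex_of_real (y (n - i))) = (\<Sum>i \<in> {1..min n p0}. complex_of_real (a i * y (n - i)))"
        by (rule sum.mono_neutral_cong_right) (auto simp: coeffP')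
      also have "\<dots> = (\<Sum>j = 1..p0. complex_of_real (a j * (if j \<le> n then y (n - j) else 0)))"
        by (rule sum.mono_neutral_cong_left) auto
      also have "coeff P 0 = 1" by (rule c0)
      also have "1 * complex_of_real (y n) + (\<Sum>j = 1..p0. complex_of_real (a j * (if j \<le> n then y (n - j) else 0)))
          = complex_of_real (y n + (\<Sum>j = 1..p0. a j * (if j \<le> n then y (n - j) else 0)))"
        by simp
      also have "\<dots> = complex_of_real (e n)" using rec by simp
      finally show ?thesis .
    qed
    have YY: "Y = inverse F * (F * Y)"
      using inverse_mult_eq_1[of F] F0 by (simp add: mult.assoc[symmetric])
    have ybound: "\<bar>y n\<bar> \<le> (\<Sum>i\<le>n. c i * \<bar>e (n - i)\<bar>)" for n
    proof -
      have eq: "complex_of_real (y n) = (\<Sum>i = 0..n. inverse F $ i * complex_of_real (e (n - i)))"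
      proof -
        have "complex_of_real (y n) = Y $ n" unfolding Y_def by simp
        also have "\<dots> = (inverse F * (F * Y)) $ n" by (subst YY) (rule refl)
        also have "\<dots> = (\<Sum>i = 0..n. inverse F $ i * (F * Y) $ (n - i))" by (rule fps_mult_nth)
        also have "\<dots> = (\<Sum>i = 0..n. inverse F $ i * complex_of_real (e (n - i)))" by (simp only: FY)
        finally show ?thesis .
      qed
      have "\<bar>y n\<bar> = norm (complex_of_real (y n))" by simp
      also have "\<dots> = norm (\<Sum>i = 0..n. inverse F $ i * complex_of_real (e (n - i)))" by (simp only: eq)
      also have "\<dots> \<le> (\<Sum>i = 0..n. norm (inverse F $ i * complex_of_real (e (n - i))))"
        by (rule norm_sum)
      also have "\<dots> = (\<Sum>i\<le>n. c i * \<bar>e (n - i)\<bar>)"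
        by (simp add: c_def norm_mult atLeast0AtMost)
      finally show ?thesis .
    qed
    have "(\<Sum>n\<le>N. (y n)^2) \<le> (\<Sum>n\<le>N. (\<Sum>i\<le>n. c i * \<bar>e (n - i)\<bar>)^2)"
    proof (intro sum_mono)
      fix n
      have "\<bar>y n\<bar>^2 \<le> (\<Sum>i\<le>n. c i * \<bar>e (n - i)\<bar>)^2"
        by (intro power_mono ybound) simp
      thus "(y n)^2 \<le> (\<Sum>i\<le>n. c i * \<bar>e (n - i)\<bar>)^2" by simp
    qed
    also have "\<dots> \<le> (suminf c)^2 * (\<Sum>k\<le>N. \<bar>e k\<bar>^2)"
      by (rule young[OF _ cs]) (auto simp: c_def)
    finally show "(\<Sum>n\<le>N. (y n)^2) \<le> (suminf c)^2 * (\<Sum>n\<le>N. (e n)^2)" by simp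
  qed
qed


lemma u_bound:
  fixes M :: "'w measure" and u :: "nat \<Rightarrow> 'w \<Rightarrow> real"
  assumes "\<And>n. u n \<in> borel_measurable M"
    and "\<And>n. distr M lborel (u n) = uniform_measure lborel {-\<delta>..\<delta>}"
  shows "AE x in M. \<forall>n. \<bar>u n x\<bar> \<le> \<delta>"
proof -
  have "AE x in M. u n x \<in> {-\<delta>..\<delta>}" for n
  proof (rule AE_distrD[of "u n" M lborel])
    show "u n \<in> measurable M lborel" using assms(1)[of n] by simp
    show "AE x in distr M lborel (u n). x \<in> {- \<delta>..\<delta>}"
      unfolding assms(2) by (rule AE_uniform_measureI) auto
  qed
  hence "AE x in M. \<forall>n. u n x \<in> {-\<delta>..\<delta>}" by (simp add: AE_all_countable)
  thus ?thesis
  proof eventually_elim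
    case (elim x)
    show ?case
    proof
      fix n
      from elim have "u n x \<in> {-\<delta>..\<delta>}" ..
      thus "\<bar>u n x\<bar> \<le> \<delta>" by (simp add: abs_le_iff)
    qed
  qed
qed

lemma gauss_exp_moment:
  "(\<integral>\<^sup>+x. ennreal (std_normal_density x) * ennreal (exp (x^2/4)) \<partial>lborel) = ennreal (sqrt 2)"
proof -
  have eq: "std_normal_density x * exp (x^2/4) = sqrt 2 * normal_density 0 (sqrt 2) x" for x
  proof -
    have "exp (- (x\<^sup>2) / 2) * exp ((x\<^sup>2)/4) = exp (- (x\<^sup>2)/4)" by (simp flip: exp_add)
    thus ?thesis
      by (simp add: std_normal_density_def normal_density_def real_sqrt_mult field_simps)
  qed
  have "(\<integral>\<^sup>+x. ennreal (std_normal_density x) * ennreal (exp (x^2/4)) \<partial>lborel)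
      = (\<integral>\<^sup>+x. ennreal (sqrt 2) * ennreal (normal_density 0 (sqrt 2) x) \<partial>lborel)"
    by (intro nn_integral_cong) (simp add: eq ennreal_mult[symmetric])
  also have "\<dots> = ennreal (sqrt 2) * (\<integral>\<^sup>+x. ennreal (normal_density 0 (sqrt 2) x) \<partial>lborel)"
    by (rule nn_integral_cmult) simp
  also have "(\<integral>\<^sup>+x. ennreal (normal_density 0 (sqrt 2) x) \<partial>lborel) = 1"
  proof -
    interpret N: prob_space "density lborel (normal_density 0 (sqrt 2))"
      by (rule prob_space_normal_density) simp
    have "emeasure (density lborel (normal_density 0 (sqrt 2))) UNIV = 1"
      using N.emeasure_space_1 by simp
    thus ?thesis by (simp add: emeasure_density)
  qed
  finally show ?thesis by simp
qed

lemma w_bound: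
  fixes M :: "'w measure" and w :: "nat \<Rightarrow> 'w \<Rightarrow> real"
  assumes P: "prob_space M"
    and w_dist: "\<And>n. distributed M lborel (w n) std_normal_density"
    and w_indep: "prob_space.indep_vars M (\<lambda>_. borel) w UNIV"
  shows "AE x in M. \<exists>N. \<forall>m\<ge>N. (\<Sum>k<m. (w k x)^2) \<le> 4 * real m"
proof -
  interpret prob_space M by (rule P)
  have wm[measurable]: "w k \<in> borel_measurable M" for k
    using distributed_measurable[OF w_dist[of k]] by simp
  define Z where "Z k x = exp ((w k x)^2/4)" for k x
  have Zm[measurable]: "Z k \<in> borel_measurable M" for k unfolding Z_def by measurable
  have EZ: "(\<integral>\<^sup>+x. ennreal (Z k x) \<partial>M) = ennreal (sqrt 2)" for k
  proof -
    have "(\<integral>\<^sup>+x. ennreal (Z k x) \<partial>M) = (\<integral>\<^sup>+x. ennreal (std_normal_density x) * ennreal (exp (x^2/4)) \<partial>lborel)"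
      unfolding Z_def by (rule distributed_nn_integral[OF w_dist, symmetric]) simp
    thus ?thesis using gauss_exp_moment by simp
  qed
  have indZ: "indep_vars (\<lambda>_. borel) Z {..<m}" for m
  proof -
    have "indep_vars (\<lambda>_. borel) (\<lambda>k x. (\<lambda>t. exp (t^2/4)) (w k x)) UNIV"
      by (rule indep_vars_compose2[OF w_indep]) simp
    thus ?thesis unfolding Z_def by (rule indep_vars_subset) simp
  qed
  define B where "B m = {x \<in> space M. 4 * real m < (\<Sum>k<m. (w k x)^2)}" for m
  have Bs[measurable]: "B m \<in> sets M" for m unfolding B_def by measurable
  have Bbound: "measure M (B m) \<le> (sqrt 2 / exp 1)^m" for m
  proof -
    have "ennreal (exp (real m)) * emeasure M (B m) = (\<integral>\<^sup>+x. ennreal (exp (real m)) * indicator (B m) x \<partial>M)"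
      by (simp add: nn_integral_cmult_indicator)
    also have "\<dots> \<le> (\<integral>\<^sup>+x. ennreal (\<Prod>k<m. Z k x) \<partial>M)"
    proof (intro nn_integral_mono)
      fix x assume x: "x \<in> space M"
      show "ennreal (exp (real m)) * indicator (B m) x \<le> ennreal (\<Prod>k<m. Z k x)"
      proof (cases "x \<in> B m")
        case True
        hence "real m < (\<Sum>k<m. (w k x)^2/4)" unfolding B_def by (simp add: sum_divide_distrib[symmetric])
        hence "exp (real m) \<le> exp (\<Sum>k<m. (w k x)^2/4)" by simp
        also have "\<dots> = (\<Prod>k<m. Z k x)" unfolding Z_def by (simp add: exp_sum)
        finally show ?thesis using True by (simp add: ennreal_leI)
      qed simp
    qed
    also have "\<dots> = (\<integral>\<^sup>+x. (\<Prod>k<m. ennreal (Z k x)) \<partial>M)"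
      by (intro nn_integral_cong) (simp add: Z_def prod_ennreal)
    also have "\<dots> = (\<Prod>k<m. \<integral>\<^sup>+x. ennreal (Z k x) \<partial>M)"
    proof -
      have "indep_vars (\<lambda>_. borel) (\<lambda>k x. ennreal (Z k x)) {..<m}"
        by (rule indep_vars_compose2[OF indZ]) simp
      thus ?thesis by (intro indep_vars_nn_integral) auto
    qed
    also have "\<dots> = ennreal (sqrt 2 ^ m)" by (simp add: EZ prod_ennreal ennreal_power)
    finally have "ennreal (exp (real m)) * emeasure M (B m) \<le> ennreal (sqrt 2 ^ m)" .
    hence "ennreal (exp (real m) * measure M (B m)) \<le> ennreal (sqrt 2 ^ m)"
      by (simp add: emeasure_eq_measure ennreal_mult)
    hence "exp (real m) * measure M (B m) \<le> sqrt 2 ^ m" by (simp add: ennreal_le_iff)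
    hence "measure M (B m) \<le> sqrt 2 ^ m / exp (real m)" by (simp add: field_simps)
    also have "\<dots> = (sqrt 2 / exp 1)^m" by (simp add: power_divide exp_of_nat_mult[symmetric])
    finally show ?thesis .
  qed
  have "summable (\<lambda>m. measure M (B m))"
  proof (rule summable_comparison_test[OF _ summable_geometric])
    show "\<exists>N. \<forall>n\<ge>N. norm (measure M (B n)) \<le> (sqrt 2 / exp 1)^n" using Bbound by auto
    have "sqrt 2 < 2" by (rule real_less_lsqrt) auto
    also have "2 \<le> exp (1::real)" using exp_ge_add_one_self[of 1] by simp
    finally show "norm (sqrt 2 / exp (1::real)) < 1" by simp
  qed
  from borel_cantelli_AE1[OF Bs _ this]
  have "AE x in M. eventually (\<lambda>m. x \<in> space M - B m) sequentially" by (simp add: emeasure_eq_measure)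
  thus ?thesis
  proof eventually_elim
    case (elim x)
    then obtain N where "\<forall>m\<ge>N. x \<in> space M - B m" unfolding eventually_sequentially by auto
    thus ?case unfolding B_def by (auto simp: not_less)
  qed
qed



lemma max_bound:
  fixes S :: "real set"
  assumes "finite S" "\<And>k. k \<in> S \<Longrightarrow> k \<le> B"
  shows "Max S \<le> max B (Max {})"
proof (cases "S = {}")
  case False thus ?thesis using assms by (simp add: le_max_iff_disj)
qed simp

lemma eig_finite: "finite {k. eigenvalue (info_mat s u p q n) k}"
proof -
  have "info_mat s u p q n \<in> carrier_mat (p+q) (p+q)" unfolding info_mat_def by simp
  note A = this
  from degree_monic_char_poly[OF A] have "char_poly (info_mat s u p q n) \<noteq> 0" by auto
  from poly_roots_finite[OF this] show ?thesis unfolding eigenvalue_root_char_poly[OF A] .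
qed

lemma eig_bound:
  assumes "eigenvalue (info_mat s u p q n) k"
  shows "k \<le> 1 + (\<Sum>i = 0..n. \<Sum>m<p+q. (psi s u p q i m)^2)"
proof -
  define d where "d = p + q"
  define A where "A = info_mat s u p q n"
  define f where "f i m = psi s u p q i m" for i m
  have Ad: "dim_row A = d" "dim_col A = d" unfolding A_def info_mat_def d_def by auto
  have Ae: "A $$ (r, l) = (\<Sum>i = 0..n. f i r * f i l) + (if r = l then 1 else 0)" if "r < d" "l < d" for r l
    using that unfolding A_def info_mat_def d_def f_def by simp
  from assms obtain v where ev: "eigenvector A v k" unfolding eigenvalue_def A_def by auto
  hence vd: "dim_vec v = d" and vnz: "v \<noteq> 0\<^sub>v d" and Av: "A *\<^sub>v v = k \<cdot>\<^sub>v v"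
    unfolding eigenvector_def Ad by auto
  define x where "x r = v $ r" for r
  define S where "S = (\<Sum>r<d. (x r)^2)"
  obtain r0 where r0: "r0 < d" "x r0 \<noteq> 0" using vnz vd unfolding x_def by (auto simp: vec_eq_iff)
  have Spos: "S > 0" unfolding S_def
    by (rule sum_pos2[of _ r0]) (use r0 in auto)
  define g where "g i = (\<Sum>l<d. f i l * x l)" for i
  have row: "k * x r = (\<Sum>i = 0..n. f i r * g i) + x r" if "r < d" for r
  proof -
    have "k * x r = (A *\<^sub>v v) $ r" using Av that vd unfolding x_def by simp
    also have "\<dots> = (\<Sum>l<d. A $$ (r, l) * x l)"
      using that Ad vd by (simp add: scalar_prod_def x_def atLeast0LessThan)
    also have "\<dots> = (\<Sum>l<d. (\<Sum>i = 0..n. f i r * f i l * x l) + (if r = l then x l else 0))"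
      using that by (intro sum.cong refl) (simp add: Ae distrib_right sum_distrib_right)
    also have "\<dots> = (\<Sum>l<d. \<Sum>i = 0..n. f i r * f i l * x l) + (\<Sum>l<d. if r = l then x l else 0)"
      by (rule sum.distrib)
    also have "(\<Sum>l<d. \<Sum>i = 0..n. f i r * f i l * x l) = (\<Sum>i = 0..n. \<Sum>l<d. f i r * f i l * x l)"
      by (rule sum.swap)
    also have "\<dots> = (\<Sum>i = 0..n. f i r * g i)"
      unfolding g_def by (simp only: sum_distrib_left mult.assoc)
    also have "(\<Sum>l<d. if r = l then x l else 0) = x r" using that by simp
    finally show ?thesis .
  qed
  have "k * S = (\<Sum>r<d. x r * (k * x r))" unfolding S_def sum_distrib_left
    by (rule sum.cong) (simp_all only: power2_eq_square mult.left_commute)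
  also have "\<dots> = (\<Sum>r<d. x r * ((\<Sum>i = 0..n. f i r * g i) + x r))"
    by (intro sum.cong refl) (simp add: row)
  also have "\<dots> = (\<Sum>r<d. \<Sum>i = 0..n. x r * f i r * g i) + S"
    unfolding S_def distrib_left sum.distrib sum_distrib_left power2_eq_square mult.assoc ..
  also have "(\<Sum>r<d. \<Sum>i = 0..n. x r * f i r * g i) = (\<Sum>i = 0..n. \<Sum>r<d. x r * f i r * g i)"
    by (rule sum.swap)
  also have "\<dots> = (\<Sum>i = 0..n. (g i)^2)"
    unfolding g_def power2_eq_square sum_distrib_right
    by (intro sum.cong refl) (simp only: mult.commute mult.left_commute)
  also have "(\<Sum>i = 0..n. (g i)^2) + S \<le> (\<Sum>i = 0..n. (\<Sum>l<d. (f i l)^2) * S) + S"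
    unfolding S_def g_def by (intro add_right_mono sum_mono Cauchy_Schwarz_ineq_sum)
  also have "(\<Sum>i = 0..n. (\<Sum>l<d. (f i l)^2) * S) + S = (1 + (\<Sum>i = 0..n. \<Sum>m<d. (f i m)^2)) * S"
    by (simp only: distrib_right sum_distrib_right mult_1 add.commute)
  finally have "k * S \<le> (1 + (\<Sum>i = 0..n. \<Sum>m<d. (f i m)^2)) * S" .
  with Spos show ?thesis unfolding d_def f_def by simp
qed

lemma shift_sum_le2:
  fixes G :: "nat \<Rightarrow> real"
  assumes "\<And>k. G k \<ge> 0"
  shows "(\<Sum>i = 0..n. if m < i then G (i - m) else 0) \<le> (\<Sum>j = 1..n. G j)"
proof (cases "m < n")
  case True
  have "(\<Sum>i = 0..n. if m < i then G (i - m) else 0) = (\<Sum>i\<in>{1+m..(n-m)+m}. G (i - m))"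
    using True by (intro sum.mono_neutral_cong_right) auto
  also have "\<dots> = (\<Sum>j = 1..n-m. G j)"
    by (subst sum.shift_bounds_cl_nat_ivl) simp
  also have "\<dots> \<le> (\<Sum>j = 1..n. G j)"
    by (rule sum_mono2) (auto simp: assms)
  finally show ?thesis .
next
  case False
  hence "(\<Sum>i = 0..n. if m < i then G (i - m) else 0) = 0" by (intro sum.neutral) auto
  thus ?thesis by (simp add: sum_nonneg assms)
qed


lemma sum_split_pq: "(\<Sum>m<p+q. f m) = (\<Sum>m<p. f m) + (\<Sum>m<q. f (p + m)) " for f :: "nat \<Rightarrow> real"
  by (induction q) (auto simp: add.assoc)

lemma psi_sum:
  "(\<Sum>i = 0..n. \<Sum>m<p+q. (psi s u p q i m)^2) \<le> real p * (\<Sum>j = 1..n. (s j)^2) + real q * (\<Sum>j = 1..n. (u j)^2)"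
proof -
  have "(\<Sum>i = 0..n. \<Sum>m<p+q. (psi s u p q i m)^2)
      = (\<Sum>i = 0..n. (\<Sum>m<p. if m < i then (s (i - m))^2 else 0) + (\<Sum>m<q. if m < i then (u (i - m))^2 else 0))"
    unfolding sum_split_pq by (intro sum.cong refl arg_cong2[where f="(+)"]) (auto simp: psi_def)
  also have "\<dots> = (\<Sum>m<p. \<Sum>i = 0..n. if m < i then (s (i - m))^2 else 0) + (\<Sum>m<q. \<Sum>i = 0..n. if m < i then (u (i - m))^2 else 0)"
    by (simp add: sum.distrib sum.swap[of _ "{0..n}"])
  also have "\<dots> \<le> (\<Sum>m<p. \<Sum>j = 1..n. (s j)^2) + (\<Sum>m<q. \<Sum>j = 1..n. (u j)^2)"
    by (intro add_mono sum_mono shift_sum_le2) auto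
  finally show ?thesis by simp
qed


lemma quant_err: assumes "eps > 0" shows "\<bar>quant eps v - v\<bar> \<le> eps / 2"
proof -
  define t where "t = v / eps + 1/2"
  have f1: "real_of_int \<lfloor>t\<rfloor> \<le> t" "t < real_of_int \<lfloor>t\<rfloor> + 1" by linarith+
  have f2: "eps * real_of_int \<lfloor>t\<rfloor> \<le> eps * t" using f1 assms by (simp add: mult_left_mono)
  have f3: "eps * t < eps * (real_of_int \<lfloor>t\<rfloor> + 1)" using f1 assms by (simp only: mult_strict_left_mono)
  have f4: "eps * t = v + eps/2" unfolding t_def using assms by (simp add: distrib_left)
  have "eps * real_of_int \<lfloor>t\<rfloor> - v \<le> eps/2" "-(eps/2) \<le> eps * real_of_int \<lfloor>t\<rfloor> - v"
    using f2 f3 f4 by (simp_all add: distrib_left)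
  thus ?thesis unfolding quant_def t_def[symmetric] abs_le_iff by linarith
qed

lemma sq_sum_le: "(A + B)^2 \<le> 2 * A^2 + 2 * (B::real)^2"
proof -
  have "0 \<le> (A - B)^2" by simp
  thus ?thesis by (simp add: power2_eq_square algebra_simps)
qed

lemma quant_sq: assumes "eps > 0" shows "(quant eps v)^2 \<le> 2 * v^2 + eps^2"
proof -
  define d where "d = quant eps v - v"
  have "\<bar>d\<bar> \<le> eps/2" unfolding d_def by (rule quant_err[OF assms])
  hence A: "d^2 \<le> (eps/2)^2" by (metis abs_ge_zero power2_abs power_mono)
  have B0: "(v + d)^2 \<le> 2 * v^2 + 2 * d^2" by (rule sq_sum_le)
  have C: "(eps/2)^2 = eps^2/4" by (simp add: power_divide)
  have D: "v + d = quant eps v" by (simp add: d_def)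
  have E: "eps^2 \<ge> 0" by simp
  have B: "(quant eps v)^2 \<le> 2 * v^2 + 2 * d^2" using B0 D by simp
  from A B C E show ?thesis by linarith
qed

lemma per_x:
  fixes a b :: "nat \<Rightarrow> real" and p0 q0 pstar :: nat and eps \<delta> H :: real
    and y u w :: "nat \<Rightarrow> real"
  assumes sys: "\<And>n. y (Suc n) =
        - (\<Sum>j = 1..p0. a j * (if j \<le> n + 1 then y (n + 1 - j) else 0))
        + (\<Sum>j = 1..q0. b j * (if j \<le> n + 1 then u (n + 1 - j) else 0))
        + w (Suc n)"
    and H0: "H \<ge> 0"
    and Hst: "\<And>(y::nat\<Rightarrow>real) e N. (\<forall>n. y n + (\<Sum>j = 1..p0. a j * (if j \<le> n then y (n - j) else 0)) = e n)
          \<Longrightarrow> (\<Sum>n\<le>N. (y n)^2) \<le> H * (\<Sum>n\<le>N. (e n)^2)"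
    and eps: "eps > 0" and hu: "\<And>n. \<bar>u n\<bar> \<le> \<delta>"
    and hw: "\<And>m. m \<ge> N1 \<Longrightarrow> (\<Sum>k<m. (w k)^2) \<le> 4 * real m"
  defines "Bs \<equiv> (\<Sum>j = 1..q0. \<bar>b j\<bar>)"
  defines "c4 \<equiv> real pstar * (2 * H * (2 * Bs^2 * \<delta>^2 + 8) + eps^2) + real q0 * \<delta>^2 + 1"
  shows "\<exists>N. \<forall>n\<ge>N. lambda_max (info_mat (\<lambda>i. quant eps (y i)) u pstar q0 n) \<le> c4 * (real n + 1)"
proof -
  define K1 where "K1 = 2 * Bs^2 * \<delta>^2 + 8"
  define e where "e n = y n + (\<Sum>j = 1..p0. a j * (if j \<le> n then y (n - j) else 0))" for n
  have d0: "\<delta> \<ge> 0" using hu[of 0] by linarith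
  have Bs0: "Bs \<ge> 0" unfolding Bs_def by (simp add: sum_nonneg)
  have e0: "e 0 = y 0" unfolding e_def by (intro add_cancel_left_right[THEN iffD2] sum.neutral) auto
  have eS: "e (Suc m) = (\<Sum>j = 1..q0. b j * (if j \<le> m + 1 then u (m + 1 - j) else 0)) + w (Suc m)" for m
    using sys[of m] unfolding e_def Suc_eq_plus1 by linarith
  have esq: "(e n)^2 \<le> (if n = 0 then (y 0)^2 else 0) + 2 * Bs^2 * \<delta>^2 + 2 * (w n)^2" for n
  proof (cases n)
    case 0 thus ?thesis using e0 by simp
  next
    case (Suc m)
    have "\<bar>\<Sum>j = 1..q0. b j * (if j \<le> m + 1 then u (m + 1 - j) else 0)\<bar> \<le> (\<Sum>j = 1..q0. \<bar>b j\<bar> * \<delta>)"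
    proof -
      have "\<bar>\<Sum>j = 1..q0. b j * (if j \<le> m + 1 then u (m + 1 - j) else 0)\<bar> \<le> (\<Sum>j = 1..q0. \<bar>b j * (if j \<le> m + 1 then u (m + 1 - j) else 0)\<bar>)"
        by (rule sum_abs)
      also have "\<dots> \<le> (\<Sum>j = 1..q0. \<bar>b j\<bar> * \<delta>)"
        by (intro sum_mono) (auto simp: abs_mult d0 hu intro: mult_left_mono)
      finally show ?thesis .
    qed
    hence "\<bar>e n\<bar> \<le> Bs * \<delta> + \<bar>w n\<bar>" using Suc eS[of m] unfolding Bs_def sum_distrib_right[symmetric] by simp
    hence "(e n)^2 \<le> (Bs * \<delta> + \<bar>w n\<bar>)^2" by (metis abs_ge_zero power2_abs power_mono)
    also have "\<dots> \<le> 2 * Bs^2 * \<delta>^2 + 2 * (w n)^2"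
      using sq_sum_le[of "Bs * \<delta>" "\<bar>w n\<bar>"] by (simp add: power_mult_distrib)
    finally show ?thesis using Suc by simp
  qed
  have ysum: "(\<Sum>n\<le>N. (y n)^2) \<le> H * ((y 0)^2 + real (N+1) * K1)" if "N + 1 \<ge> N1" for N
  proof -
    have "(\<Sum>n\<le>N. (y n)^2) \<le> H * (\<Sum>n\<le>N. (e n)^2)" by (rule Hst) (simp add: e_def)
    also have "(\<Sum>n\<le>N. (e n)^2) \<le> (\<Sum>n\<le>N. (if n = 0 then (y 0)^2 else 0) + 2 * Bs^2 * \<delta>^2 + 2 * (w n)^2)"
      by (intro sum_mono esq)
    also have "\<dots> = (y 0)^2 + real (N+1) * (2 * Bs^2 * \<delta>^2) + 2 * (\<Sum>k<N+1. (w k)^2)"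
      by (simp add: sum.distrib sum_distrib_left lessThan_Suc_atMost)
    also have "\<dots> \<le> (y 0)^2 + real (N+1) * K1"
      using hw[OF that] unfolding K1_def by (simp add: algebra_simps)
    finally show ?thesis using H0 by (simp add: mult_left_mono)
  qed
  define T0 where "T0 = 1 + 2 * real pstar * H * (y 0)^2"
  have main: "lambda_max (info_mat (\<lambda>i. quant eps (y i)) u pstar q0 n) \<le> max (T0 + (c4 - 1) * (real n + 1)) (Max {})"
    if "n + 1 \<ge> N1" for n
  proof -
    let ?s = "\<lambda>i. quant eps (y i)"
    have "k \<le> T0 + (c4 - 1) * (real n + 1)" if "eigenvalue (info_mat ?s u pstar q0 n) k" for k
    proof -
      have "k \<le> 1 + (\<Sum>i = 0..n. \<Sum>m<pstar+q0. (psi ?s u pstar q0 i m)^2)" by (rule eig_bound[OF that])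
      also have "\<dots> \<le> 1 + (real pstar * (\<Sum>j = 1..n. (?s j)^2) + real q0 * (\<Sum>j = 1..n. (u j)^2))"
        using psi_sum by simp
      also have "(\<Sum>j = 1..n. (?s j)^2) \<le> (\<Sum>j = 1..n. 2 * (y j)^2 + eps^2)"
        by (intro sum_mono quant_sq eps)
      also have "\<dots> = 2 * (\<Sum>j = 1..n. (y j)^2) + real n * eps^2"
        by (simp add: sum.distrib sum_distrib_left)
      also have "(\<Sum>j = 1..n. (y j)^2) \<le> (\<Sum>j \<le> n. (y j)^2)"
        by (rule sum_mono2) auto
      also have "(\<Sum>j = 1..n. (u j)^2) \<le> (\<Sum>j = 1..n. \<delta>^2)"
        by (intro sum_mono) (metis abs_ge_zero hu power2_abs power_mono)
      also have "(\<Sum>j \<le> n. (y j)^2) \<le> H * ((y 0)^2 + real (n+1) * K1)"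
        by (rule ysum[OF \<open>n + 1 \<ge> N1\<close>])
      finally have "k \<le> 1 + (real pstar * (2 * (H * ((y 0)^2 + real (n + 1) * K1)) + real n * eps^2) + real q0 * (real n * \<delta>^2))"
        by (simp add: mult_left_mono)
      also have "\<dots> \<le> T0 + (c4 - 1) * (real n + 1)"
        unfolding T0_def c4_def K1_def[symmetric]
        using H0 eps by (simp add: algebra_simps mult_left_mono)
      finally show ?thesis .
    qed
    thus ?thesis unfolding lambda_max_def by (intro max_bound eig_finite) auto
  qed
  have c41: "c4 \<ge> 1" unfolding c4_def using H0 eps Bs0 by (simp add: add_nonneg_nonneg)
  obtain N2 :: nat where N2: "real N2 \<ge> T0 + \<bar>Max {}\<bar>" by (meson real_arch_simple)
  show ?thesis
  proof (intro exI[of _ "N1 + N2"] allI impI)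
    fix n assume n: "n \<ge> N1 + N2"
    have "lambda_max (info_mat (\<lambda>i. quant eps (y i)) u pstar q0 n) \<le> max (T0 + (c4 - 1) * (real n + 1)) (Max {})"
      using n by (intro main) simp
    also have "\<dots> \<le> c4 * (real n + 1)"
    proof -
      have "real n + 1 \<ge> T0 + \<bar>Max {}\<bar>" using n N2 by linarith
      moreover have "(c4 - 1) * (real n + 1) \<ge> 0" using c41 by simp
      moreover have "c4 * (real n + 1) \<ge> real n + 1" using c41 by simp
      moreover have "Max ({}::real set) \<le> \<bar>Max ({}::real set)\<bar>" "0 \<le> \<bar>Max ({}::real set)\<bar>" by simp_all
      moreover have "T0 \<ge> 0" unfolding T0_def using H0 by simp
      ultimately have "T0 + (c4 - 1) * (real n + 1) \<le> c4 * (real n + 1)" "Max {} \<le> c4 * (real n + 1)"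
        by (simp add: algebra_simps, linarith)
      thus ?thesis by simp
    qed
    finally show "lambda_max (info_mat (\<lambda>i. quant eps (y i)) u pstar q0 n) \<le> c4 * (real n + 1)" .
  qed
qed
theorem lemma5:
  fixes M :: "'w measure"
    and a b :: "nat \<Rightarrow> real" and p0 q0 pstar :: nat
    and eps \<delta> :: real
    and w u y :: "nat \<Rightarrow> 'w \<Rightarrow> real"
  assumes "prob_space M"
    and q0: "q0 \<ge> 1" and bq0: "b q0 \<noteq> 0"
    and ap0: "p0 > 0 \<Longrightarrow> a p0 \<noteq> 0"
    and pstar: "pstar > 0" "p0 \<le> pstar"
    and eps: "eps > 0"
    and sys: "\<And>n x. y (Suc n) x =
        - (\<Sum>j = 1..p0. a j * (if j \<le> n + 1 then y (n + 1 - j) x else 0))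
        + (\<Sum>j = 1..q0. b j * (if j \<le> n + 1 then u (n + 1 - j) x else 0))
        + w (Suc n) x"
    and w_dist: "\<And>n. distributed M lborel (w n) std_normal_density"
    and w_indep: "prob_space.indep_vars M (\<lambda>_. borel) w UNIV"
    and A1_pos: "\<delta> > 0"
    and A1_meas: "\<And>n. u n \<in> borel_measurable M"
    and A1_dist: "\<And>n. distr M lborel (u n) = uniform_measure lborel {-\<delta>..\<delta>}"
    and A1_indep: "prob_space.indep_vars M (\<lambda>_. borel) u UNIV"
    and A2: "\<And>z::complex. cmod z \<le> 1 \<Longrightarrow> 1 + (\<Sum>j = 1..p0. of_real (a j) * z ^ j) \<noteq> 0"
  shows "\<exists>c4 > 0. AE x in M. \<exists>N. \<forall>n \<ge> N.
           lambda_max (info_mat (\<lambda>i. quant eps (y i x)) (\<lambda>i. u i x) pstar q0 n)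
             \<le> c4 * (real n + 1)"
proof -
  interpret prob_space M by fact
  obtain H where H0: "H \<ge> 0" and Hst: "\<forall>(y::nat\<Rightarrow>real) e N. (\<forall>n. y n + (\<Sum>j = 1..p0. a j * (if j \<le> n then y (n - j) else 0)) = e n)
          \<longrightarrow> (\<Sum>n\<le>N. (y n)^2) \<le> H * (\<Sum>n\<le>N. (e n)^2)"
    using stab[OF A2] by blast
  have AEu: "AE x in M. \<forall>n. \<bar>u n x\<bar> \<le> \<delta>" by (rule u_bound[OF A1_meas A1_dist])
  have AEw: "AE x in M. \<exists>N. \<forall>m\<ge>N. (\<Sum>k<m. (w k x)^2) \<le> 4 * real m"
    by (rule w_bound[OF assms(1) w_dist w_indep])
  define Bs where "Bs = (\<Sum>j = 1..q0. \<bar>b j\<bar>)"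
  define c4 where "c4 = real pstar * (2 * H * (2 * Bs^2 * \<delta>^2 + 8) + eps^2) + real q0 * \<delta>^2 + 1"
  show ?thesis
  proof (intro exI[of _ c4] conjI)
    show "c4 > 0"
    proof -
      have "0 \<le> real pstar * (2 * H * (2 * Bs^2 * \<delta>^2 + 8) + eps^2)"
        using H0 by (intro mult_nonneg_nonneg add_nonneg_nonneg) auto
      moreover have "0 \<le> real q0 * \<delta>^2" by simp
      ultimately show ?thesis unfolding c4_def by linarith
    qed
    show "AE x in M. \<exists>N. \<forall>n \<ge> N.
           lambda_max (info_mat (\<lambda>i. quant eps (y i x)) (\<lambda>i. u i x) pstar q0 n) \<le> c4 * (real n + 1)"
      using AEu AEw
    proof eventually_elim
      case (elim x)
      then obtain N1 where hw: "\<And>m. m \<ge> N1 \<Longrightarrow> (\<Sum>k<m. (w k x)^2) \<le> 4 * real m" by blast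
      show ?case unfolding c4_def Bs_def
        by (rule per_x[where y="\<lambda>n. y n x" and u="\<lambda>n. u n x" and w="\<lambda>n. w n x", OF sys H0 Hst[rule_format] eps _ hw])
          (use elim in auto)
    qed
  qed
qed

end
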